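(* Let $0<q<1$ and let $\{P_n\}_{n=0}^{\infty}$ be a sequence of monic polynomials in $x=\cos\theta$ orthogonal on $(a,b)$ with respect to a weight function $w(x)$. Suppose that $\{\mathcal{D}_q^2P_j\}_{j=2}^{\infty}$ is orthogonal on $(a,b)$ with respect to $\pi(x)w(x)$, where $\pi(x)$ is a polynomial of degree at most $4$. Then for each $n\ge 4$ there exist constants $b_{n,n+j}$, $j\in\{-2,-1,0,1,2\}$, such that $$P_n(x)=\sum_{j=-2}^{2}b_{n,n+j}\,\mathcal{D}_q^2P_{n+j}(x).$$
   Context: For a polynomial $f$ in $x=\cos\theta$, write $z=e^{i\theta}$ and $\breve f(z)=f\big(\tfrac{z+z^{-1}}{2}\big)$; the Askey–Wilson operator is $\mathcal{D}_qf(x)=\dfrac{\breve f(q^{1/2}z)-\breve f(q^{-1/2}z)}{(z-z^{-1})(q^{1/2}-q^{-1/2})/2}$. It maps polynomials of degree $n$ to polynomials of degree $n-1$. *)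

theory Defs
  imports "HOL-Analysis.Analysis" "HOL-Computational_Algebra.Polynomial"
begin

text \<open>The breve transform: for a real polynomial f in x = cos theta, evaluate
  f((z + 1/z)/2) for complex z.\<close>
definition breve :: "real poly \<Rightarrow> complex \<Rightarrow> complex" where
  "breve f z = poly (map_poly complex_of_real f) ((z + inverse z) / 2)"

definition AW_op :: "real \<Rightarrow> real poly \<Rightarrow> real poly" where
  "AW_op q f = (THE g. \<forall>z::complex. z \<noteq> 0 \<and> z\<^sup>2 \<noteq> 1 \<longrightarrow>
      poly (map_poly complex_of_real g) ((z + inverse z) / 2) =
      (breve f (complex_of_real (sqrt q) * z) - breve f (z / complex_of_real (sqrt q))) /
      ((z - inverse z) * complex_of_real (sqrt q - 1 / sqrt q) / 2))"

definition ivl :: "ereal \<Rightarrow> ereal \<Rightarrow> real set" where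
  "ivl a b = {x. a < ereal x \<and> ereal x < b}"

definition orthogonal_on :: "ereal \<Rightarrow> ereal \<Rightarrow> (real \<Rightarrow> real) \<Rightarrow> (nat \<Rightarrow> real poly) \<Rightarrow> nat set \<Rightarrow> bool" where
  "orthogonal_on a b w p I \<longleftrightarrow>
     (\<forall>m\<in>I. \<forall>n\<in>I.
        set_integrable lborel (ivl a b) (\<lambda>x. poly (p m) x * poly (p n) x * w x) \<and>
        (m \<noteq> n \<longrightarrow> (LINT x:ivl a b|lborel. poly (p m) x * poly (p n) x * w x) = 0) \<and>
        (m = n \<longrightarrow> (LINT x:ivl a b|lborel. poly (p m) x * poly (p n) x * w x) \<noteq> 0))"

end

theory Submission imports Defs begin

abbreviation mc :: "real poly \<Rightarrow> complex poly" where "mc \<equiv> map_poly complex_of_real"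

lemma mc_add: "mc (p + q) = mc p + mc q"
  by (rule poly_eqI) (simp add: coeff_map_poly)
lemma mc_diff: "mc (p - q) = mc p - mc q"
  by (rule poly_eqI) (simp add: coeff_map_poly)
lemma mc_smult: "mc (smult c p) = smult (of_real c) (mc p)"
  by (rule poly_eqI) (simp add: coeff_map_poly)
lemma mc_mult: "mc (p * q) = mc p * mc q"
  by (rule poly_eqI) (simp add: coeff_map_poly coeff_mult)
lemma mc_sum: "mc (\<Sum>i\<in>A. f i) = (\<Sum>i\<in>A. mc (f i))"
  by (induction A rule: infinite_finite_induct) (auto simp: mc_add)
lemma mc_pCons: "mc (pCons a p) = pCons (of_real a) (mc p)"
  by (simp add: map_poly_pCons)
lemma poly_mc_real: "poly (mc p) (of_real x) = of_real (poly p x)"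
  by (induction p) (auto simp: map_poly_pCons)

fun LL :: "real \<Rightarrow> nat \<Rightarrow> real" where
  "LL t 0 = 1" | "LL t (Suc 0) = t + 1/t"
| "LL t (Suc (Suc m)) = (t + 1/t) * LL t (Suc m) - LL t m"

fun HH :: "real \<Rightarrow> nat \<Rightarrow> real poly" where
  "HH t 0 = 1" | "HH t (Suc 0) = [:0, t + 1/t:]"
| "HH t (Suc (Suc m)) = [:0, t + 1/t:] * HH t (Suc m) - [:(t - 1/t)^2/4, 0, 1:] * HH t m"

lemma LL_rec: assumes "t \<noteq> 0" shows "LL t (Suc m) - t * LL t m = (1/t)^(Suc m)"
proof (induction m)
  case 0 then show ?case by simp
next
  case (Suc m)
  have "LL t (Suc (Suc m)) - t * LL t (Suc m) = (1/t) * (LL t (Suc m) - t * LL t m)"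
    using assms by (simp add: field_simps)
  then show ?case using Suc by simp
qed

lemma LL_pos: assumes "t > 0" shows "LL t m > 0"
proof (induction m)
  case 0 then show ?case by simp
next
  case (Suc m)
  have "LL t (Suc m) = t * LL t m + (1/t)^(Suc m)" using LL_rec[of t m] assms by simp
  then show ?case using Suc assms by (simp add: add_pos_pos)
qed

lemma HH_deg: "degree (HH t m) \<le> m \<and> coeff (HH t m) m = LL t m"
proof (induction t m rule: HH.induct)
  case (1 t) then show ?case by simp
next
  case (2 t) then show ?case by simp
next
  case (3 t m)
  let ?A = "[:0, t + 1/t:] * HH t (Suc m)" and ?B = "[:(t - 1/t)^2/4, 0, 1:] * HH t m"
  have dA: "degree ?A \<le> Suc (Suc m)"
    using 3 degree_mult_le[of "[:0, t + 1/t:]" "HH t (Suc m)"] by auto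
  have dB: "degree ?B \<le> Suc (Suc m)"
    using 3 degree_mult_le[of "[:(t - 1/t)^2/4, 0, 1:]" "HH t m"] by auto
  have "degree (?A - ?B) \<le> Suc (Suc m)"
    using dA dB degree_diff_le by blast
  moreover have "coeff ?A (Suc (Suc m)) = (t + 1/t) * LL t (Suc m)"
    using 3 by simp
  moreover have "coeff ?B (Suc (Suc m)) = LL t m"
    using 3 by (simp add: coeff_eq_0)
  ultimately show ?case by simp
qed

lemma HH_eval:
  fixes x1 x2 X :: complex
  assumes "x1 + x2 = of_real (t + 1/t) * X" "x1 * x2 = X^2 + of_real ((t - 1/t)^2/4)"
  shows "(x1 - x2) * poly (mc (HH t m)) X = x1^(Suc m) - x2^(Suc m)"
proof -
  let ?s = "of_real (t + 1/t) :: complex" and ?e = "of_real ((t - 1/t)^2/4) :: complex"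
  have key: "\<And>m. (x1 - x2) * poly (mc (HH t (Suc (Suc m)))) X
     = (x1 + x2) * ((x1 - x2) * poly (mc (HH t (Suc m))) X) - (x1 * x2) * ((x1 - x2) * poly (mc (HH t m)) X)"
  proof -
    fix m
    have "poly (mc (HH t (Suc (Suc m)))) X = ?s * X * poly (mc (HH t (Suc m))) X - (X^2 + ?e) * poly (mc (HH t m)) X"
      by (simp only: HH.simps mc_diff mc_mult poly_diff poly_mult)
         (simp add: map_poly_pCons power2_eq_square algebra_simps)
    also have "\<dots> = (x1 + x2) * poly (mc (HH t (Suc m))) X - (x1 * x2) * poly (mc (HH t m)) X"
      using assms by (simp add: algebra_simps)
    finally have h: "poly (mc (HH t (Suc (Suc m)))) X = (x1 + x2) * poly (mc (HH t (Suc m))) X - (x1 * x2) * poly (mc (HH t m)) X" .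
    show "?thesis m" by (simp only: h) (simp add: algebra_simps)
  qed
  have "(x1 - x2) * poly (mc (HH t m)) X = x1^(Suc m) - x2^(Suc m) \<and>
        (x1 - x2) * poly (mc (HH t (Suc m))) X = x1^(Suc (Suc m)) - x2^(Suc (Suc m))"
  proof (induction m)
    case 0
    have "(x1 - x2) * poly (mc (HH t (Suc 0))) X = (x1 - x2) * (x1 + x2)"
      using assms(1) by (simp add: map_poly_pCons algebra_simps)
    then show ?case by (simp add: algebra_simps power2_eq_square)
  next
    case (Suc m)
    have "(x1 - x2) * poly (mc (HH t (Suc (Suc m)))) X = x1^(Suc (Suc (Suc m))) - x2^(Suc (Suc (Suc m)))"
      unfolding key[of m] Suc.IH[THEN conjunct1] Suc.IH[THEN conjunct2] by (simp add: algebra_simps)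
    then show ?case using Suc by (simp del: HH.simps)
  qed
  then show ?thesis by blast
qed


definition DD :: "real \<Rightarrow> real poly \<Rightarrow> real poly" where
  "DD t f = (\<Sum>m<degree f. smult (coeff f (Suc m)) (HH t m))"

lemma poly_mc_altdef: "poly (mc p) z = (\<Sum>i\<le>degree p. of_real (coeff p i) * z^i)"
  by (simp add: poly_altdef coeff_map_poly degree_map_poly)

lemma DD_eval:
  fixes x1 x2 X :: complex
  assumes "x1 + x2 = of_real (t + 1/t) * X" "x1 * x2 = X^2 + of_real ((t - 1/t)^2/4)"
  shows "(x1 - x2) * poly (mc (DD t f)) X = poly (mc f) x1 - poly (mc f) x2"
proof -
  have "(x1 - x2) * poly (mc (DD t f)) X =
        (\<Sum>m<degree f. of_real (coeff f (Suc m)) * ((x1 - x2) * poly (mc (HH t m)) X))"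
    by (simp add: DD_def mc_sum mc_smult poly_sum sum_distrib_left algebra_simps)
  also have "\<dots> = (\<Sum>m<degree f. of_real (coeff f (Suc m)) * (x1^(Suc m) - x2^(Suc m)))"
    using HH_eval[OF assms] by simp
  also have "\<dots> = poly (mc f) x1 - poly (mc f) x2"
  proof (cases "degree f")
    case 0 then show ?thesis by (simp add: poly_mc_altdef)
  next
    case (Suc d)
    have "poly (mc f) x1 - poly (mc f) x2 = (\<Sum>i\<le>Suc d. of_real (coeff f i) * (x1^i - x2^i))"
      unfolding poly_mc_altdef Suc by (simp add: sum_subtractf algebra_simps)
    also have "\<dots> = (\<Sum>i\<le>d. of_real (coeff f (Suc i)) * (x1^(Suc i) - x2^(Suc i)))"
      by (subst sum.atMost_Suc_shift) simp
    finally show ?thesis by (simp add: Suc lessThan_Suc_atMost)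
  qed
  finally show ?thesis .
qed

lemma DD_deg0: "degree f = 0 \<Longrightarrow> DD t f = 0"
  by (simp add: DD_def)

lemma DD_deg:
  assumes "degree f = Suc d"
  shows "degree (DD t f) \<le> d" "coeff (DD t f) d = lead_coeff f * LL t d"
proof -
  have c: "coeff (DD t f) k = (\<Sum>m<Suc d. coeff f (Suc m) * coeff (HH t m) k)" for k
    by (simp add: DD_def assms coeff_sum)
  have "coeff (DD t f) k = 0" if "k > d" for k
  proof -
    have "coeff (HH t m) k = 0" if "m < Suc d" for m
      using HH_deg[of t m] that \<open>k > d\<close> by (intro coeff_eq_0) simp
    then show ?thesis unfolding c by simp
  qed
  then show "degree (DD t f) \<le> d" by (intro degree_le) auto
  have "coeff (DD t f) d = (\<Sum>m<d. coeff f (Suc m) * coeff (HH t m) d) + coeff f (Suc d) * coeff (HH t d) d"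
    unfolding c by simp
  also have "(\<Sum>m<d. coeff f (Suc m) * coeff (HH t m) d) = 0"
  proof -
    have "coeff (HH t m) d = 0" if "m < d" for m
      using HH_deg[of t m] that by (intro coeff_eq_0) simp
    then show ?thesis by simp
  qed
  finally show "coeff (DD t f) d = lead_coeff f * LL t d" using HH_deg[of t d] assms by simp
qed

lemma AW_op_DD:
  assumes "0 < q" "q < 1"
  shows "AW_op q f = DD (sqrt q) f"
proof -
  define t where "t = sqrt q"
  have t: "t > 0" "t < 1" using assms by (auto simp: t_def)
  let ?Pr = "\<lambda>g. \<forall>z::complex. z \<noteq> 0 \<and> z\<^sup>2 \<noteq> 1 \<longrightarrow>
      poly (map_poly complex_of_real g) ((z + inverse z) / 2) =
      (breve f (complex_of_real (sqrt q) * z) - breve f (z / complex_of_real (sqrt q))) /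
      ((z - inverse z) * complex_of_real (sqrt q - 1 / sqrt q) / 2)"
  have ex: "?Pr (DD t f)"
  proof (intro allI impI)
    fix z :: complex assume z: "z \<noteq> 0 \<and> z\<^sup>2 \<noteq> 1"
    define x1 where "x1 = (of_real t * z + inverse (of_real t * z)) / 2"
    define x2 where "x2 = (z / of_real t + inverse (z / of_real t)) / 2"
    define X where "X = (z + inverse z) / 2"
    have tc: "(of_real t :: complex) \<noteq> 0" using t by simp
    have s: "x1 + x2 = of_real (t + 1/t) * X"
      using tc z unfolding x1_def x2_def X_def by (simp add: field_simps)
    have p: "x1 * x2 = X^2 + of_real ((t - 1/t)^2/4)"
      using tc z unfolding x1_def x2_def X_def by (simp add: field_simps power2_eq_square)
    have d: "(z - inverse z) * complex_of_real (t - 1 / t) / 2 = x1 - x2"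
      using tc z unfolding x1_def x2_def by (simp add: field_simps)
    have zz: "z - inverse z \<noteq> 0"
    proof
      assume "z - inverse z = 0"
      then have "z * z = 1" using z by (simp add: field_simps)
      then show False using z by (simp add: power2_eq_square)
    qed
    have tt: "complex_of_real (t - 1 / t) \<noteq> 0"
    proof
      assume "complex_of_real (t - 1 / t) = 0"
      then have "t - 1 / t = 0" by (simp only: of_real_eq_0_iff)
      then have "t * t = 1" using t by (simp add: field_simps)
      moreover have "t * t < 1 * 1" using t by (intro mult_strict_mono) auto
      ultimately show False by simp
    qed
    have nz: "x1 - x2 \<noteq> 0" using d zz tt by (metis divide_eq_0_iff mult_eq_0_iff zero_neq_numeral)
    show "poly (mc (DD t f)) ((z + inverse z) / 2) =
      (breve f (complex_of_real (sqrt q) * z) - breve f (z / complex_of_real (sqrt q))) /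
      ((z - inverse z) * complex_of_real (sqrt q - 1 / sqrt q) / 2)"
      unfolding t_def[symmetric] d breve_def x1_def[symmetric] x2_def[symmetric] X_def[symmetric]
      using DD_eval[OF s p, of f] nz by (simp add: field_simps)
  qed
  have un: "g = DD t f" if gP: "?Pr g" for g
  proof -
    have "poly (g - DD t f) y = 0" if "y > 1" for y
    proof -
      define r where "r = sqrt (y^2 - 1)"
      have r: "r \<ge> 0" "r^2 = y^2 - 1" using \<open>y > 1\<close> by (auto simp: r_def)
      define z :: complex where "z = of_real (y + r)"
      have yr: "y + r > 1" using r \<open>y > 1\<close> by simp
      have zi: "inverse z = of_real (y - r)"
      proof -
        have "(y + r) * (y - r) = 1" using r by (simp add: algebra_simps power2_eq_square)
        then show ?thesis unfolding z_def by (metis inverse_unique of_real_1 of_real_mult)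
      qed
      have z: "z \<noteq> 0 \<and> z\<^sup>2 \<noteq> 1"
      proof
        show "z \<noteq> 0" using yr unfolding z_def by (metis of_real_eq_0_iff not_one_less_zero)
        have "(y + r)^2 > 1" using yr by (simp add: one_less_power)
        then show "z\<^sup>2 \<noteq> 1" unfolding z_def by (metis of_real_eq_1_iff of_real_power less_irrefl)
      qed
      have X: "(z + inverse z) / 2 = of_real y" unfolding zi by (simp add: z_def)
      have "poly (mc g) ((z + inverse z) / 2) = poly (mc (DD t f)) ((z + inverse z) / 2)"
        using gP[rule_format, OF z] ex[rule_format, OF z] by (rule trans[OF _ sym])
      then have "poly (mc g) (of_real y) = poly (mc (DD t f)) (of_real y)" unfolding X .
      then show ?thesis by (simp add: poly_mc_real)
    qed
    then have "{1<..} \<subseteq> {y. poly (g - DD t f) y = 0}" by (auto simp only: greaterThan_iff mem_Collect_eq)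
    then have "\<not> finite {y. poly (g - DD t f) y = 0}"
      using infinite_Ioi[of "1::real"] finite_subset by blast
    then have "g - DD t f = 0" using poly_roots_finite by blast
    then show ?thesis by simp
  qed
  have "(THE g. ?Pr g) = DD t f" using ex un by (rule the_equality)
  then show ?thesis unfolding AW_op_def t_def .
qed

lemma DD_exact:
  assumes "t > 0" "degree f = Suc d"
  shows "degree (DD t f) = d" "DD t f \<noteq> 0"
proof -
  have "f \<noteq> 0" using assms by auto
  then have "coeff (DD t f) d \<noteq> 0" using DD_deg(2)[OF assms(2), of t] LL_pos[OF assms(1), of d] by simp
  then show "degree (DD t f) = d" "DD t f \<noteq> 0"
    using le_degree[of "DD t f" d] DD_deg(1)[OF assms(2), of t] by auto
qed

lemma span_lemma:
  fixes B :: "nat \<Rightarrow> real poly"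
  assumes "\<And>k. degree (B k) = k" "\<And>k. B k \<noteq> 0"
  shows "(\<forall>i\<ge>m. coeff p i = 0) \<Longrightarrow> \<exists>c. p = (\<Sum>k<m. smult (c k) (B k))"
proof (induction m arbitrary: p)
  case 0
  then have "p = 0" by (intro poly_eqI) simp
  then show ?case by simp
next
  case (Suc m)
  define l where "l = coeff (B m) m"
  have l: "l \<noteq> 0" using assms[of m] unfolding l_def by (metis leading_coeff_0_iff)
  define p' where "p' = p - smult (coeff p m / l) (B m)"
  have "\<forall>i\<ge>m. coeff p' i = 0"
  proof (intro allI impI)
    fix i assume "m \<le> i"
    show "coeff p' i = 0"
    proof (cases "i = m")
      case True then show ?thesis using l by (simp add: p'_def l_def)
    next
      case False
      then have "i > m" using \<open>m \<le> i\<close> by simp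
      then show ?thesis using Suc.prems assms(1)[of m] by (simp add: p'_def coeff_eq_0)
    qed
  qed
  then obtain c where c: "p' = (\<Sum>k<m. smult (c k) (B k))" using Suc.IH by blast
  define c' where "c' = c(m := coeff p m / l)"
  have "(\<Sum>k<m. smult (c' k) (B k)) = (\<Sum>k<m. smult (c k) (B k))"
    by (intro sum.cong) (auto simp: c'_def)
  then have "p = (\<Sum>k<Suc m. smult (c' k) (B k))"
    using c by (simp add: p'_def c'_def algebra_simps)
  then show ?case by blast
qed

lemma lint_sum:
  fixes f :: "nat \<Rightarrow> real \<Rightarrow> real"
  assumes "\<And>i. i \<in> I \<Longrightarrow> set_integrable M S (f i)"
  shows "(LINT x:S|M. (\<Sum>i\<in>I. c i * f i x)) = (\<Sum>i\<in>I. c i * (LINT x:S|M. f i x))"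
proof -
  have "(LINT x:S|M. (\<Sum>i\<in>I. c i * f i x)) = (\<Sum>i\<in>I. LINT x:S|M. c i * f i x)"
    unfolding set_lebesgue_integral_def scaleR_sum_right
  proof (rule Bochner_Integration.integral_sum[where I=I and f="\<lambda>i x. indicator S x *\<^sub>R (c i * f i x)"])
    fix i assume "i \<in> I"
    then have "set_integrable M S (\<lambda>x. c i * f i x)" using assms by auto
    then show "integrable M (\<lambda>x. indicator S x *\<^sub>R (c i * f i x))" by (simp add: set_integrable_def)
  qed
  then show ?thesis by simp
qed

theorem proposition3p8:
  fixes q :: real and a b :: ereal and w :: "real \<Rightarrow> real"
    and P :: "nat \<Rightarrow> real poly" and \<pi> :: "real poly"
  assumes "0 < q" "q < 1"
    and "a < b"
    and "\<And>n. degree (P n) = n \<and> lead_coeff (P n) = 1"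
    and "\<And>x. x \<in> ivl a b \<Longrightarrow> w x \<ge> 0"
    and "orthogonal_on a b w P UNIV"
    and "degree \<pi> \<le> 4"
    and "orthogonal_on a b (\<lambda>x. poly \<pi> x * w x) (\<lambda>j. AW_op q (AW_op q (P j))) {2..}"
  shows "\<forall>n\<ge>4. \<exists>c :: nat \<Rightarrow> real.
           P n = (\<Sum>k\<in>{n-2..n+2}. smult (c k) (AW_op q (AW_op q (P k))))"
proof (intro allI impI)
  fix n :: nat assume n4: "n \<ge> 4"
  define Q where "Q k = AW_op q (AW_op q (P k))" for k
  define t where "t = sqrt q"
  have t: "t > 0" using assms(1) by (simp add: t_def)
  have AW: "AW_op q g = DD t g" for g using AW_op_DD[OF assms(1,2)] t_def by simp
  have Qdeg: "degree (Q (k+2)) = k \<and> Q (k+2) \<noteq> 0" for k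
  proof -
    have d: "degree (P (k+2)) = Suc (Suc k)" using assms(4)[of "k+2"] by simp
    have "degree (DD t (P (k+2))) = Suc k" using DD_exact(1)[OF t d] .
    then show ?thesis using DD_exact[OF t] unfolding Q_def AW by blast
  qed
  have Qdeg': "degree (Q j) = j - 2" if "j \<ge> 2" for j
  proof -
    have "j - 2 + 2 = j" using that by simp
    then show ?thesis using Qdeg[of "j-2"] by metis
  qed
  have Pne: "P k \<noteq> 0" for k using assms(4)[of k] by auto
  define S where "S = ivl a b"
  define W where "W x = poly \<pi> x * w x" for x
  have oP: "\<And>m k. set_integrable lborel S (\<lambda>x. poly (P m) x * poly (P k) x * w x)"
       "\<And>m k. m \<noteq> k \<Longrightarrow> (LINT x:S|lborel. poly (P m) x * poly (P k) x * w x) = 0"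
    using assms(6) unfolding orthogonal_on_def S_def by auto
  have oQ: "\<And>m k. m \<ge> 2 \<Longrightarrow> k \<ge> 2 \<Longrightarrow> set_integrable lborel S (\<lambda>x. poly (Q m) x * poly (Q k) x * W x)"
       "\<And>m k. m \<ge> 2 \<Longrightarrow> k \<ge> 2 \<Longrightarrow> m \<noteq> k \<Longrightarrow> (LINT x:S|lborel. poly (Q m) x * poly (Q k) x * W x) = 0"
       "\<And>m. m \<ge> 2 \<Longrightarrow> (LINT x:S|lborel. poly (Q m) x * poly (Q m) x * W x) \<noteq> 0"
    using assms(8) unfolding orthogonal_on_def S_def W_def Q_def by auto
  obtain c where c: "P n = (\<Sum>k<Suc n. smult (c k) (Q (k+2)))"
  proof -
    have "\<forall>i\<ge>Suc n. coeff (P n) i = 0" using assms(4)[of n] by (auto intro: coeff_eq_0)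
    then show ?thesis using span_lemma[of "\<lambda>k. Q (k+2)" "Suc n" "P n"] Qdeg that by blast
  qed
  define c' where "c' k = c (k - 2)" for k
  have Pn: "P n = (\<Sum>k\<in>{2..n+2}. smult (c' k) (Q k))"
  proof -
    have "(\<Sum>k\<in>{2..n+2}. smult (c' k) (Q k)) = (\<Sum>k\<in>{0..n}. smult (c' (k+2)) (Q (k+2)))"
    proof -
      have e: "{2..n+2} = {0+2..n+2}" by simp
      show ?thesis unfolding e by (rule sum.shift_bounds_cl_nat_ivl)
    qed
    also have "\<dots> = (\<Sum>k<Suc n. smult (c k) (Q (k+2)))"
      by (simp add: c'_def atLeast0AtMost lessThan_Suc_atMost)
    finally show ?thesis using c by simp
  qed
  have zero: "c' j = 0" if j: "2 \<le> j" "j + 3 \<le> n" for j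
  proof -
    let ?I = "LINT x:S|lborel. poly (P n) x * poly (Q j) x * W x"
    have "?I = (LINT x:S|lborel. (\<Sum>k\<in>{2..n+2}. c' k * (poly (Q k) x * poly (Q j) x * W x)))"
    proof -
      have "poly (P n) x * poly (Q j) x * W x = (\<Sum>k\<in>{2..n+2}. c' k * (poly (Q k) x * poly (Q j) x * W x))" for x
        by (subst Pn) (simp only: poly_sum poly_smult sum_distrib_right mult.assoc)
      then show ?thesis by simp
    qed
    also have "\<dots> = (\<Sum>k\<in>{2..n+2}. c' k * (LINT x:S|lborel. poly (Q k) x * poly (Q j) x * W x))"
      by (rule lint_sum) (use oQ(1) j in auto)
    also have "\<dots> = c' j * (LINT x:S|lborel. poly (Q j) x * poly (Q j) x * W x)"
    proof -
      have jin: "j \<in> {2..n+2}" using j by simp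
      have "(\<Sum>k\<in>{2..n+2} - {j}. c' k * (LINT x:S|lborel. poly (Q k) x * poly (Q j) x * W x)) = 0"
        using oQ(2) j by (intro sum.neutral) auto
      then show ?thesis using sum.remove[OF _ jin, of "\<lambda>k. c' k * (LINT x:S|lborel. poly (Q k) x * poly (Q j) x * W x)"]
        by simp
    qed
    finally have I1: "?I = c' j * (LINT x:S|lborel. poly (Q j) x * poly (Q j) x * W x)" .
    define R where "R = Q j * \<pi>"
    have "degree R \<le> (j - 2) + 4"
      using degree_mult_le[of "Q j" \<pi>] Qdeg'[OF j(1)] assms(7) unfolding R_def by simp
    then have "degree R < n" using j by simp
    then have "\<forall>i\<ge>n. coeff R i = 0" by (auto intro: coeff_eq_0)
    then obtain d where d: "R = (\<Sum>i<n. smult (d i) (P i))"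
      using span_lemma[of P n R] assms(4) Pne by blast
    have "?I = (LINT x:S|lborel. (\<Sum>i<n. d i * (poly (P n) x * poly (P i) x * w x)))"
    proof -
      have "poly (P n) x * poly (Q j) x * W x = poly (P n) x * poly R x * w x" for x
        by (simp add: R_def W_def)
      also have "poly (P n) x * poly R x * w x = (\<Sum>i<n. d i * (poly (P n) x * poly (P i) x * w x))" for x
        by (subst d) (simp only: poly_sum poly_smult sum_distrib_right sum_distrib_left mult_ac)
      finally show ?thesis by simp
    qed
    also have "\<dots> = (\<Sum>i<n. d i * (LINT x:S|lborel. poly (P n) x * poly (P i) x * w x))"
      by (rule lint_sum) (use oP(1) in auto)
    also have "\<dots> = 0" using oP(2) by (intro sum.neutral) auto
    finally have "c' j * (LINT x:S|lborel. poly (Q j) x * poly (Q j) x * W x) = 0" using I1 by simp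
    then show ?thesis using oQ(3)[OF j(1)] by simp
  qed
  have "(\<Sum>k\<in>{2..n+2}. smult (c' k) (Q k)) = (\<Sum>k\<in>{n-2..n+2}. smult (c' k) (Q k))"
  proof (rule sum.mono_neutral_right)
    show "finite {2..n+2}" by simp
    show "{n-2..n+2} \<subseteq> {2..n+2}" using n4 by auto
    show "\<forall>i\<in>{2..n+2} - {n-2..n+2}. smult (c' i) (Q i) = 0"
      using zero n4 by auto
  qed
  then show "\<exists>c :: nat \<Rightarrow> real. P n = (\<Sum>k\<in>{n-2..n+2}. smult (c k) (AW_op q (AW_op q (P k))))"
    using Pn unfolding Q_def by metis
qed

end
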